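(* Under the setting of the previous statement (Bernoulli vector $\boldsymbol{I}$ with $\Pr(I_j=1)=p_j\in(0,1)$, independent uniform vectors $\boldsymbol{U}_0,\boldsymbol{U}_1$, and $U_m=U_{0,m}^{1-p_m}U_{1,m}^{I_m}$), the copula of $\boldsymbol{U}$ can be written as $$C(\boldsymbol{u}) = \prod_{m=1}^d u_m\left(1 + \sum_{k=1}^d\sum_{1\le j_1<\dots<j_k\le d}\nu_{j_1\dots j_k}\prod_{n=1}^k\left(1-u_{j_n}^{\frac{p_{j_n}}{1-p_{j_n}}}\right)\right),\qquad \boldsymbol{u}\in[0,1]^d,$$ where $\nu_{j_1\dots j_k} = E\left[\prod_{n=1}^k\frac{I_{j_n}-p_{j_n}}{p_{j_n}}\right]$ (in particular $\nu_{j}=0$ for $k=1$). *)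

theory Defs
  imports "HOL-Probability.Probability"
begin

definition copula_of ::
  "'a measure \<Rightarrow> (nat \<Rightarrow> 'a \<Rightarrow> real) \<Rightarrow> nat \<Rightarrow> ((nat \<Rightarrow> real) \<Rightarrow> real) \<Rightarrow> bool" where
  "copula_of M X d C \<longleftrightarrow>
     (\<forall>x::nat \<Rightarrow> real.
        measure M {\<omega> \<in> space M. \<forall>m\<in>{1..d}. X m \<omega> \<le> x m}
          = C (\<lambda>m. measure M {\<omega> \<in> space M. X m \<omega> \<le> x m}))"

end

theory Submission imports Defs begin


definition clip :: "real \<Rightarrow> real" where "clip y = max 0 (min 1 y)"
definition g0 :: "real \<Rightarrow> real \<Rightarrow> real" where "g0 a x = clip x powr (1/a)"
definition g1 :: "real \<Rightarrow> real \<Rightarrow> real" where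
  "g1 a x = (clip x - a * clip x powr (1/a)) / (1 - a)"

lemma powr_le_iff_root:
  fixes t x a :: real
  assumes "0 \<le> t" "0 \<le> x" "0 < a"
  shows "(t powr a \<le> x) = (t \<le> x powr (1/a))"
proof
  assume "t powr a \<le> x"
  hence "(t powr a) powr (1/a) \<le> x powr (1/a)" using assms by (intro powr_mono2) auto
  thus "t \<le> x powr (1/a)" using assms by (simp add: powr_powr)
next
  assume "t \<le> x powr (1/a)"
  hence "t powr a \<le> (x powr (1/a)) powr a" using assms by (intro powr_mono2) auto
  thus "t powr a \<le> x" using assms by (simp add: powr_powr)
qed

lemma powr_le1': "0 \<le> (t::real) \<Longrightarrow> t \<le> 1 \<Longrightarrow> 0 \<le> a \<Longrightarrow> t powr a \<le> 1"
  using powr_mono2[of a t 1] by simp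

lemma emeasure_Icc_clip: "emeasure lborel {0..min 1 y} = ennreal (clip y)"
  by (auto simp: emeasure_lborel_Icc_eq clip_def min_def max_def ennreal_neg)

lemma nn_K:
  fixes t a x :: real
  assumes "0 < t"
  shows "(\<integral>\<^sup>+ w. indicator {0..1} w * indicator {w. t powr a * w \<le> x} w \<partial>lborel)
       = ennreal (clip (x / t powr a))"
proof -
  have tp: "0 < t powr a" using assms by simp
  have "(\<lambda>w. indicator {0..1} w * indicator {w. t powr a * w \<le> x} w :: ennreal)
        = indicator {0..min 1 (x / t powr a)}"
    using tp by (auto simp: fun_eq_iff split: split_indicator simp: pos_le_divide_eq mult.commute)
  thus ?thesis by (simp add: emeasure_Icc_clip)
qed

lemma nn_g0:
  fixes a x :: real
  assumes "0 < a"
  shows "(\<integral>\<^sup>+ t. indicator {0..1} t * indicator {t. t powr a \<le> x} t \<partial>lborel) = ennreal (g0 a x)"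
proof (cases "x < 0")
  case True
  have "(\<lambda>t. indicator {0..1} t * indicator {t. t powr a \<le> x} t :: ennreal) = (\<lambda>_. 0)"
    using True by (auto simp: fun_eq_iff split: split_indicator) (metis powr_ge_zero not_le order.strict_trans1)
  thus ?thesis using True by (simp add: g0_def clip_def)
next
  case False
  hence x0: "0 \<le> x" by simp
  have eq: "min 1 (x powr (1/a)) = clip x powr (1/a)"
  proof (cases "x \<le> 1")
    case True
    have "x powr (1/a) \<le> 1 powr (1/a)" using True x0 assms by (intro powr_mono2) auto
    thus ?thesis using True x0 assms by (auto simp: clip_def min_def)
  next
    case False thus ?thesis using assms
      by (auto simp: clip_def min_def ge_one_powr_ge_zero) 
  qed
  have "(\<lambda>t. indicator {0..1} t * indicator {t. t powr a \<le> x} t :: ennreal)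
        = indicator {0..min 1 (x powr (1/a))}"
    using x0 assms by (auto simp: fun_eq_iff split: split_indicator simp: powr_le_iff_root)
  thus ?thesis using eq by (simp add: emeasure_lborel_Icc_eq g0_def clip_def)
qed

lemma nn_g1:
  fixes a x :: real
  assumes a: "0 < a" "a < 1"
  shows "(\<integral>\<^sup>+ t. indicator {0<..1} t * ennreal (clip (x / t powr a)) \<partial>lborel) = ennreal (g1 a x)"
proof -
  consider "x \<le> 0" | "1 \<le> x" | "0 < x" "x < 1" by linarith
  then show ?thesis
  proof cases
    case 1
    have "(\<lambda>t. indicator {0<..1} t * ennreal (clip (x / t powr a))) = (\<lambda>_. 0)"
    proof
      fix t :: real
      show "indicator {0<..1} t * ennreal (clip (x / t powr a)) = 0"
      proof (cases "0 < t")
        case True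
        hence "x / t powr a \<le> 0" using 1 by (simp add: divide_nonpos_pos)
        thus ?thesis by (simp add: clip_def)
      qed (simp add: indicator_def)
    qed
    thus ?thesis using 1 by (simp add: g1_def clip_def)
  next
    case 2
    have "(\<lambda>t. indicator {0<..1} t * ennreal (clip (x / t powr a))) = indicator {0<..1}"
    proof
      fix t :: real
      show "indicator {0<..1} t * ennreal (clip (x / t powr a)) = indicator {0<..1} t"
      proof (cases "t \<in> {0<..1}")
        case True
        hence "t powr a \<le> 1" "0 < t powr a" using a by (auto intro: powr_le1')
        hence "1 \<le> x / t powr a" using 2 by (simp add: le_divide_eq)
        thus ?thesis using True by (simp add: clip_def)
      qed (auto simp: indicator_def)
    qed
    moreover have "g1 a x = 1" using 2 a by (simp add: g1_def clip_def)
    ultimately show ?thesis by simp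
  next
    case 3
    define t0 where "t0 = x powr (1/a)"
    have "x powr (1/a) < 1 powr (1/a)" using 3 a by (intro powr_less_mono2) auto
    hence t0: "0 < t0" "t0 < 1" using 3 a by (auto simp: t0_def)
    define F where "F t = x * t powr (1 - a) / (1 - a)" for t
    have eq: "(\<lambda>t. indicator {0<..1} t * ennreal (clip (x / t powr a)))
       = (\<lambda>t. indicator {0<..<t0} t + ennreal (x * t powr (-a)) * indicator {t0..1} t)"
    proof
      fix t :: real
      show "indicator {0<..1} t * ennreal (clip (x / t powr a)) = indicator {0<..<t0} t + ennreal (x * t powr (-a)) * indicator {t0..1} t"
      proof (cases "0 < t \<and> t \<le> 1")
        case True
        hence tp: "0 < t powr a" by simp
        show ?thesis
        proof (cases "t < t0")
          case lt: True
          have "t powr a < t0 powr a" using lt True a by (intro powr_less_mono2) auto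
          also have "t0 powr a = x" using 3 a by (simp add: t0_def powr_powr)
          finally have "1 < x / t powr a" using tp by (simp add: less_divide_eq)
          thus ?thesis using True lt by (simp add: clip_def indicator_def)
        next
          case ge: False
          have "t0 powr a \<le> t powr a" using ge t0 a by (intro powr_mono2) auto
          moreover have "t0 powr a = x" using 3 a by (simp add: t0_def powr_powr)
          ultimately have "x / t powr a \<le> 1" using tp by (simp add: divide_le_eq)
          moreover have "0 \<le> x / t powr a" using 3 tp by simp
          moreover have "x / t powr a = x * t powr (-a)" using True by (simp add: powr_minus divide_inverse)
          ultimately show ?thesis using True ge by (simp add: clip_def indicator_def)
        qed
      next
        case False
        thus ?thesis using t0 by (auto simp: indicator_def)
      qed
    qed
    have "(\<integral>\<^sup>+ t. ennreal (x * t powr (-a)) * indicator {t0..1} t \<partial>lborel) = ennreal (F 1 - F t0)"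
    proof (rule nn_integral_FTC_Icc)
      show "(\<lambda>t. x * t powr (-a)) \<in> borel_measurable borel" by measurable
      show "t0 \<le> 1" using t0 by simp
      fix t assume t: "t \<in> {t0..1}"
      hence tp: "0 < t" using t0 by auto
      show "0 \<le> x * t powr (-a)" using 3 by simp
      have "((\<lambda>t. t powr (1 - a)) has_real_derivative (1 - a) * t powr (1 - a - 1)) (at t)"
        using tp by (rule has_real_derivative_powr)
      note d = this
      have "(F has_real_derivative x * ((1 - a) * t powr (1 - a - 1)) / (1 - a)) (at t)"
        unfolding F_def by (rule DERIV_cdivide[OF DERIV_cmult[OF d]])
      moreover have "x * ((1 - a) * t powr (1 - a - 1)) / (1 - a) = x * t powr (-a)"
        using a by simp
      ultimately show "(F has_real_derivative x * t powr (-a)) (at t)" by simp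
    qed
    hence "(\<integral>\<^sup>+ t. indicator {0<..1} t * ennreal (clip (x / t powr a)) \<partial>lborel)
        = ennreal t0 + ennreal (F 1 - F t0)"
      unfolding eq using t0 by (subst nn_integral_add) auto
    also have "\<dots> = ennreal (t0 + (F 1 - F t0))"
    proof -
      have "t0 powr (1 - a) \<le> 1" using t0 a by (intro powr_le1') auto
      hence "F t0 \<le> F 1" using 3 a by (simp add: F_def divide_right_mono)
      thus ?thesis using t0 by (simp add: ennreal_plus)
    qed
    also have "t0 + (F 1 - F t0) = g1 a x"
    proof -
      have "t0 powr (1 - a) = x powr ((1 - a) / a)" using 3 a by (simp add: t0_def powr_powr)
      moreover have "x * x powr ((1 - a) / a) = x powr (1/a)"
      proof -
        have "x * x powr ((1 - a) / a) = x powr 1 * x powr ((1 - a) / a)" using 3 by simp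
        also have "\<dots> = x powr (1 + (1 - a) / a)" by (simp add: powr_add)
        also have "1 + (1 - a) / a = 1 / a" using a by (simp add: field_simps)
        finally show ?thesis .
      qed
      ultimately have "x * t0 powr (1 - a) = x powr (1/a)" by simp
      hence "F t0 = x powr (1/a) / (1 - a)" by (simp add: F_def)
      moreover have "clip x = x" using 3 by (simp add: clip_def)
      moreover have "F 1 = x / (1 - a)" by (simp add: F_def)
      moreover have "1 - a \<noteq> 0" using a by simp
      ultimately show ?thesis unfolding g1_def t0_def by (simp add: field_simps)
    qed
    finally show ?thesis .
  qed
qed

definition ev :: "real \<Rightarrow> real \<Rightarrow> real \<Rightarrow> (real \<times> real) set" where
  "ev a x r = {(t,w). (if r = 1 then t powr a * w else t powr a) \<le> x}"
definition GG :: "real \<Rightarrow> real \<Rightarrow> real \<Rightarrow> real" where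
  "GG a x r = (if r = 1 then g1 a x else g0 a x)"

lemma ev_measurable[measurable]: "ev a x r \<in> sets (borel \<Otimes>\<^sub>M borel)"
proof -
  have "ev a x r = {z \<in> space (borel \<Otimes>\<^sub>M borel). (if r = 1 then fst z powr a * snd z else fst z powr a) \<le> x}"
    by (auto simp: ev_def space_pair_measure)
  also have "\<dots> \<in> sets (borel \<Otimes>\<^sub>M borel)" by measurable
  finally show ?thesis .
qed

lemma uni_pair:
  assumes P: "prob_space M"
    and V: "distributed M lborel V (\<lambda>x. indicator {0..1} x)"
    and W: "distributed M lborel W (\<lambda>x. indicator {0..1} x)"
    and a: "0 < a" "a < 1"
  shows "(\<integral>\<^sup>+ \<omega>. (\<integral>\<^sup>+ \<omega>'. indicator (ev a x r) (V \<omega>, W \<omega>') \<partial>M) \<partial>M) = ennreal (GG a x r)"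
proof -
  interpret prob_space M by (rule P)
  have Vm[measurable]: "V \<in> borel_measurable M" using distributed_measurable[OF V] by simp
  have Wm[measurable]: "W \<in> borel_measurable M" using distributed_measurable[OF W] by simp
  show ?thesis
  proof (cases "r = 1")
    case False
    have "(\<integral>\<^sup>+ \<omega>. (\<integral>\<^sup>+ \<omega>'. indicator (ev a x r) (V \<omega>, W \<omega>') \<partial>M) \<partial>M)
        = (\<integral>\<^sup>+ \<omega>. indicator {t. t powr a \<le> x} (V \<omega>) \<partial>M)"
      using False by (intro nn_integral_cong) (simp add: ev_def indicator_def emeasure_space_1)
    also have "\<dots> = (\<integral>\<^sup>+ t. indicator {0..1} t * indicator {t. t powr a \<le> x} t \<partial>lborel)"
      by (rule distributed_nn_integral[OF V, symmetric]) measurable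
    also have "\<dots> = ennreal (GG a x r)" using nn_g0[OF a(1)] False by (simp add: GG_def)
    finally show ?thesis .
  next
    case True
    define Kf where "Kf t = (\<integral>\<^sup>+ w. indicator {0..1} w * indicator {w. t powr a * w \<le> x} w \<partial>lborel)" for t
    have Kfm: "Kf \<in> borel_measurable lborel"
      unfolding Kf_def by measurable
    have "(\<integral>\<^sup>+ \<omega>. (\<integral>\<^sup>+ \<omega>'. indicator (ev a x r) (V \<omega>, W \<omega>') \<partial>M) \<partial>M)
        = (\<integral>\<^sup>+ \<omega>. Kf (V \<omega>) \<partial>M)"
    proof (intro nn_integral_cong)
      fix \<omega>
      have "(\<integral>\<^sup>+ \<omega>'. indicator (ev a x r) (V \<omega>, W \<omega>') \<partial>M)
          = (\<integral>\<^sup>+ \<omega>'. indicator {w. V \<omega> powr a * w \<le> x} (W \<omega>') \<partial>M)"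
        using True by (intro nn_integral_cong) (simp add: ev_def indicator_def)
      also have "\<dots> = Kf (V \<omega>)" unfolding Kf_def
        by (rule distributed_nn_integral[OF W, symmetric]) measurable
      finally show "(\<integral>\<^sup>+ \<omega>'. indicator (ev a x r) (V \<omega>, W \<omega>') \<partial>M) = Kf (V \<omega>)" .
    qed
    also have "\<dots> = (\<integral>\<^sup>+ t. indicator {0..1} t * Kf t \<partial>lborel)"
      by (rule distributed_nn_integral[OF V Kfm, symmetric])
    also have "\<dots> = (\<integral>\<^sup>+ t. indicator {0<..1} t * ennreal (clip (x / t powr a)) \<partial>lborel)"
    proof (rule nn_integral_cong_AE)
      show "AE t in lborel. indicator {0..1} t * Kf t = indicator {0<..1} t * ennreal (clip (x / t powr a))"
        using AE_lborel_singleton[of 0]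
      proof eventually_elim
        case (elim t)
        show ?case
        proof (cases "t \<in> {0<..1}")
          case True thus ?thesis using nn_K[of t a x] by (simp add: Kf_def indicator_def)
        next
          case False thus ?thesis using elim by (auto simp: indicator_def)
        qed
      qed
    qed
    also have "\<dots> = ennreal (GG a x r)" using nn_g1[OF a] True by (simp add: GG_def)
    finally show ?thesis .
  qed
qed

lemma GG_nonneg:
  assumes "0 < a" "a < 1"
  shows "0 \<le> GG a x r"
proof -
  let ?u = "clip x"
  have u: "0 \<le> ?u" "?u \<le> 1" by (auto simp: clip_def)
  have "?u powr (1/a) \<le> ?u powr 1"
    using u assms by (intro powr_mono') (auto simp: field_simps)
  hence "?u powr (1/a) \<le> ?u" using u by (cases "?u = 0") auto
  hence "a * ?u powr (1/a) \<le> ?u" using assms u by (meson less_eq_real_def mult_left_le_one_le powr_ge_zero order_trans)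
  hence "0 \<le> g1 a x" using assms by (simp add: g1_def)
  moreover have "0 \<le> g0 a x" by (simp add: g0_def)
  ultimately show ?thesis by (simp add: GG_def)
qed

lemma powr_id_aux:
  assumes "0 \<le> (u::real)" "0 < q" "q < 1"
  shows "u * u powr (q / (1 - q)) = u powr (1 / (1 - q))"
proof (cases "u = 0")
  case False
  hence "u * u powr (q / (1 - q)) = u powr (1 + q / (1 - q))" using assms by (simp add: powr_add)
  also have "1 + q / (1 - q) = 1 / (1 - q)" using assms by (simp add: field_simps)
  finally show ?thesis .
qed simp

lemma GG_form:
  assumes q: "0 < q" "q < 1" and r: "r = 0 \<or> r = 1"
  shows "GG (1 - q) x r = clip x * (1 + (r - q) / q * (1 - clip x powr (q / (1 - q))))"
proof -
  let ?u = "clip x"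
  have u: "0 \<le> ?u" by (simp add: clip_def)
  have id: "?u * ?u powr (q / (1 - q)) = ?u powr (1 / (1 - q))" by (rule powr_id_aux[OF u q])
  show ?thesis
  proof (cases "r = 1")
    case True
    have "GG (1 - q) x r = (?u - (1 - q) * ?u powr (1 / (1 - q))) / q"
      using True by (simp add: GG_def g1_def)
    also have "\<dots> = ?u * (1 + (r - q) / q * (1 - ?u powr (q / (1 - q))))"
      using True q by (simp add: id[symmetric] field_simps)
    finally show ?thesis .
  next
    case False
    hence r0: "r = 0" using r by simp
    have "GG (1 - q) x r = ?u powr (1 / (1 - q))"
      using r0 by (simp add: GG_def g0_def)
    also have "\<dots> = ?u * (1 + (r - q) / q * (1 - ?u powr (q / (1 - q))))"
      using r0 q by (simp add: id[symmetric] field_simps)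
    finally show ?thesis .
  qed
qed




locale cop = prob_space M for M :: "'a measure" +
  fixes d :: nat and p :: "nat \<Rightarrow> real" and I :: "nat \<Rightarrow> 'a \<Rightarrow> nat" and U0 U1 :: "nat \<Rightarrow> 'a \<Rightarrow> real"
  assumes p_range: "\<And>j. j \<in> {1..d} \<Longrightarrow> 0 < p j \<and> p j < 1"
    and I_rv: "\<And>j. j \<in> {1..d} \<Longrightarrow> I j \<in> measurable M (count_space UNIV)"
    and I_01: "\<And>j \<omega>. j \<in> {1..d} \<Longrightarrow> \<omega> \<in> space M \<Longrightarrow> I j \<omega> \<in> {0, 1}"
    and I_marg: "\<And>j. j \<in> {1..d} \<Longrightarrow> measure M {\<omega> \<in> space M. I j \<omega> = 1} = p j"
    and U0_unif: "\<And>m. m \<in> {1..d} \<Longrightarrow> distributed M lborel (U0 m) (\<lambda>x. indicator {0..1} x)"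
    and U1_unif: "\<And>m. m \<in> {1..d} \<Longrightarrow> distributed M lborel (U1 m) (\<lambda>x. indicator {0..1} x)"
    and U0_indep: "indep_vars (\<lambda>_. borel) U0 {1..d}"
    and U1_indep: "indep_vars (\<lambda>_. borel) U1 {1..d}"
    and vec_indep: "indep_vars (\<lambda>_. Pi\<^sub>M {1..d} (\<lambda>_. borel))
        (\<lambda>i \<omega>. if i = (0::nat) then (\<lambda>m\<in>{1..d}. real (I m \<omega>))
                else if i = 1 then (\<lambda>m\<in>{1..d}. U0 m \<omega>)
                else (\<lambda>m\<in>{1..d}. U1 m \<omega>)) {0, 1, 2}"
begin

abbreviation "D \<equiv> {1..d}"
abbreviation "N \<equiv> Pi\<^sub>M D (\<lambda>_. borel :: real measure)"
definition "Xv i \<omega> = (if i = (0::nat) then (\<lambda>m\<in>{1..d}. real (I m \<omega>))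
                else if i = 1 then (\<lambda>m\<in>{1..d}. U0 m \<omega>)
                else (\<lambda>m\<in>{1..d}. U1 m \<omega>))"
definition "X0 \<omega> = (\<lambda>m\<in>D. real (I m \<omega>))"
definition "X1 \<omega> = (\<lambda>m\<in>D. U0 m \<omega>)"
definition "X2 \<omega> = (\<lambda>m\<in>D. U1 m \<omega>)"

lemma U0m[measurable]: "m \<in> D \<Longrightarrow> U0 m \<in> borel_measurable M"
  using distributed_measurable[OF U0_unif] by simp
lemma U1m[measurable]: "m \<in> D \<Longrightarrow> U1 m \<in> borel_measurable M"
  using distributed_measurable[OF U1_unif] by simp
lemma Im[measurable]: "m \<in> D \<Longrightarrow> I m \<in> measurable M (count_space UNIV)"
  using I_rv by simp

lemma indep_12: "indep_var N X1 N X2"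
proof -
  have "indep_var (Pi\<^sub>M {1} (\<lambda>_. N)) (\<lambda>\<omega>. restrict (\<lambda>i. Xv i \<omega>) {1})
                  (Pi\<^sub>M {2} (\<lambda>_. N)) (\<lambda>\<omega>. restrict (\<lambda>i. Xv i \<omega>) {2})"
    using vec_indep unfolding Xv_def[abs_def] by (intro indep_var_restrict) auto
  hence "indep_var N ((\<lambda>f. f 1) \<circ> (\<lambda>\<omega>. restrict (\<lambda>i. Xv i \<omega>) {1}))
                   N ((\<lambda>f. f 2) \<circ> (\<lambda>\<omega>. restrict (\<lambda>i. Xv i \<omega>) {2}))"
    by (rule indep_var_compose) (auto intro: measurable_component_singleton)
  moreover have "((\<lambda>f. f 1) \<circ> (\<lambda>\<omega>. restrict (\<lambda>i. Xv i \<omega>) {1})) = X1"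
    "((\<lambda>f. f 2) \<circ> (\<lambda>\<omega>. restrict (\<lambda>i. Xv i \<omega>) {2})) = X2"
    by (auto simp: Xv_def X1_def X2_def fun_eq_iff)
  ultimately show ?thesis by simp
qed

definition "c0 = (\<lambda>m\<in>D. 0::real)"
definition "X0' \<omega> = (X0 \<omega>, c0)"

lemma c0_space: "c0 \<in> space N" unfolding c0_def space_PiM by (rule restrict_PiE_iff[THEN iffD2]) auto

lemma indep_0_12: "indep_var (N \<Otimes>\<^sub>M N) X0' (N \<Otimes>\<^sub>M N) (\<lambda>\<omega>. (X1 \<omega>, X2 \<omega>))"
proof -
  have "indep_var (Pi\<^sub>M {0} (\<lambda>_. N)) (\<lambda>\<omega>. restrict (\<lambda>i. Xv i \<omega>) {0})
                  (Pi\<^sub>M {1,2} (\<lambda>_. N)) (\<lambda>\<omega>. restrict (\<lambda>i. Xv i \<omega>) {1,2})"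
    using vec_indep unfolding Xv_def[abs_def] by (intro indep_var_restrict) auto
  hence "indep_var (N \<Otimes>\<^sub>M N) ((\<lambda>f. (f 0, c0)) \<circ> (\<lambda>\<omega>. restrict (\<lambda>i. Xv i \<omega>) {0}))
                   (N \<Otimes>\<^sub>M N) ((\<lambda>f. (f 1, f 2)) \<circ> (\<lambda>\<omega>. restrict (\<lambda>i. Xv i \<omega>) {1,2}))"
    by (rule indep_var_compose) (auto intro!: measurable_component_singleton measurable_Pair measurable_const c0_space c0_space[simplified])
  moreover have "((\<lambda>f. (f 0, c0)) \<circ> (\<lambda>\<omega>. restrict (\<lambda>i. Xv i \<omega>) {0})) = X0'"
    "((\<lambda>f. (f 1, f 2)) \<circ> (\<lambda>\<omega>. restrict (\<lambda>i. Xv i \<omega>) {1,2})) = (\<lambda>\<omega>. (X1 \<omega>, X2 \<omega>))"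
    by (auto simp: Xv_def X0'_def X0_def X1_def X2_def fun_eq_iff)
  ultimately show ?thesis by simp
qed

lemma X0m[measurable]: "X0 \<in> measurable M N" unfolding X0_def by measurable
lemma X1m[measurable]: "X1 \<in> measurable M N" unfolding X1_def by measurable
lemma X2m[measurable]: "X2 \<in> measurable M N" unfolding X2_def by measurable

definition "aa m = 1 - p m"
definition "Hm x r m t = (\<integral>\<^sup>+ \<omega>. indicator (ev (aa m) (x m) (r m)) (t, U1 m \<omega>) \<partial>M)"

lemma aa_range: "m \<in> D \<Longrightarrow> 0 < aa m \<and> aa m < 1"
  using p_range[of m] by (auto simp: aa_def)

lemma Hm_meas[measurable]: "m \<in> D \<Longrightarrow> Hm x r m \<in> borel_measurable borel"
  unfolding Hm_def by measurable

lemma stage2: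
  assumes K: "K \<subseteq> D"
  shows "(\<integral>\<^sup>+ y. (\<Prod>m\<in>K. indicator (ev (aa m) (x m) (r m)) (fst y m, snd y m)) \<partial>(distr M (N \<Otimes>\<^sub>M N) (\<lambda>\<omega>. (X1 \<omega>, X2 \<omega>))))
       = (\<Prod>m\<in>K. ennreal (GG (aa m) (x m) (r m)))"
proof -
  have fin: "finite K" using K finite_subset by blast
  have dist: "distr M (N \<Otimes>\<^sub>M N) (\<lambda>\<omega>. (X1 \<omega>, X2 \<omega>)) = distr M N X1 \<Otimes>\<^sub>M distr M N X2"
    using indep_12 by (simp add: indep_var_distribution_eq)
  interpret Q2: prob_space "distr M N X2" by (rule prob_space_distr) (rule X2m)
  have compm: "\<And>m. m \<in> K \<Longrightarrow> (\<lambda>v. v m) \<in> measurable N borel"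
    using K by (intro measurable_component_singleton) auto
  have fm: "(\<lambda>y. \<Prod>m\<in>K. indicator (ev (aa m) (x m) (r m)) (fst y m, snd y m) :: ennreal) \<in> borel_measurable (N \<Otimes>\<^sub>M N)"
  proof (rule borel_measurable_prod_ennreal)
    fix m assume m: "m \<in> K"
    have "(\<lambda>y. (fst y m, snd y m)) \<in> measurable (N \<Otimes>\<^sub>M N) (borel \<Otimes>\<^sub>M borel)"
      using compm[OF m] by measurable
    thus "(\<lambda>y. indicator (ev (aa m) (x m) (r m)) (fst y m, snd y m) :: ennreal) \<in> borel_measurable (N \<Otimes>\<^sub>M N)"
      by (rule measurable_compose) simp
  qed
  have inner: "(\<integral>\<^sup>+ w. (\<Prod>m\<in>K. indicator (ev (aa m) (x m) (r m)) (v m, w m)) \<partial>distr M N X2)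
      = (\<Prod>m\<in>K. Hm x r m (v m))" for v
  proof -
    have gm: "(\<lambda>w. \<Prod>m\<in>K. indicator (ev (aa m) (x m) (r m)) (v m, w m) :: ennreal) \<in> borel_measurable N"
    proof (rule borel_measurable_prod_ennreal)
      fix m assume m: "m \<in> K"
      have "(\<lambda>w. (v m, w m)) \<in> measurable N (borel \<Otimes>\<^sub>M borel)"
        using compm[OF m] by measurable
      thus "(\<lambda>w. indicator (ev (aa m) (x m) (r m)) (v m, w m) :: ennreal) \<in> borel_measurable N"
        by (rule measurable_compose) simp
    qed
    have "(\<integral>\<^sup>+ w. (\<Prod>m\<in>K. indicator (ev (aa m) (x m) (r m)) (v m, w m)) \<partial>distr M N X2)
        = (\<integral>\<^sup>+ \<omega>. (\<Prod>m\<in>K. indicator (ev (aa m) (x m) (r m)) (v m, X2 \<omega> m)) \<partial>M)"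
      using gm by (intro nn_integral_distr[OF X2m]) simp
    also have "\<dots> = (\<integral>\<^sup>+ \<omega>. (\<Prod>m\<in>K. indicator (ev (aa m) (x m) (r m)) (v m, U1 m \<omega>)) \<partial>M)"
      using K by (intro nn_integral_cong prod.cong) (auto simp: X2_def)
    also have "\<dots> = (\<Prod>m\<in>K. \<integral>\<^sup>+ \<omega>. indicator (ev (aa m) (x m) (r m)) (v m, U1 m \<omega>) \<partial>M)"
    proof (rule indep_vars_nn_integral[OF fin])
      show "indep_vars (\<lambda>_. borel) (\<lambda>m \<omega>. indicator (ev (aa m) (x m) (r m)) (v m, U1 m \<omega>) :: ennreal) K"
        by (rule indep_vars_compose2[OF indep_vars_subset[OF U1_indep K]]) measurable
    qed simp
    finally show ?thesis by (simp add: Hm_def)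
  qed
  have hm: "(\<lambda>v. \<Prod>m\<in>K. Hm x r m (v m)) \<in> borel_measurable N"
  proof (rule borel_measurable_prod_ennreal)
    fix m assume m: "m \<in> K"
    hence "m \<in> D" using K by auto
    thus "(\<lambda>v. Hm x r m (v m)) \<in> borel_measurable N"
      using compm[OF m] by (intro measurable_compose[OF _ Hm_meas])
  qed
  have "(\<integral>\<^sup>+ y. (\<Prod>m\<in>K. indicator (ev (aa m) (x m) (r m)) (fst y m, snd y m)) \<partial>(distr M (N \<Otimes>\<^sub>M N) (\<lambda>\<omega>. (X1 \<omega>, X2 \<omega>))))
      = (\<integral>\<^sup>+ v. \<integral>\<^sup>+ w. (\<Prod>m\<in>K. indicator (ev (aa m) (x m) (r m)) (v m, w m)) \<partial>distr M N X2 \<partial>distr M N X1)"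
  proof -
    have "sets (distr M N X1 \<Otimes>\<^sub>M distr M N X2) = sets (N \<Otimes>\<^sub>M N)"
      by (intro sets_pair_measure_cong) simp_all
    hence fm': "(\<lambda>y. \<Prod>m\<in>K. indicator (ev (aa m) (x m) (r m)) (fst y m, snd y m) :: ennreal) \<in> borel_measurable (distr M N X1 \<Otimes>\<^sub>M distr M N X2)"
      using fm measurable_cong_sets by blast
    show ?thesis unfolding dist using Q2.nn_integral_fst[OF fm'] by simp
  qed
  also have "\<dots> = (\<integral>\<^sup>+ v. (\<Prod>m\<in>K. Hm x r m (v m)) \<partial>distr M N X1)"
    by (simp only: inner)
  also have "\<dots> = (\<integral>\<^sup>+ \<omega>. (\<Prod>m\<in>K. Hm x r m (X1 \<omega> m)) \<partial>M)"
    using hm by (intro nn_integral_distr[OF X1m]) simp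
  also have "\<dots> = (\<integral>\<^sup>+ \<omega>. (\<Prod>m\<in>K. Hm x r m (U0 m \<omega>)) \<partial>M)"
    using K by (intro nn_integral_cong prod.cong) (auto simp: X1_def)
  also have "\<dots> = (\<Prod>m\<in>K. \<integral>\<^sup>+ \<omega>. Hm x r m (U0 m \<omega>) \<partial>M)"
  proof (rule indep_vars_nn_integral[OF fin])
    show "indep_vars (\<lambda>_. borel) (\<lambda>m \<omega>. Hm x r m (U0 m \<omega>)) K"
      by (rule indep_vars_compose2[OF indep_vars_subset[OF U0_indep K]]) (use K in auto)
  qed simp
  also have "\<dots> = (\<Prod>m\<in>K. ennreal (GG (aa m) (x m) (r m)))"
  proof (rule prod.cong)
    fix m assume "m \<in> K"
    hence m: "m \<in> D" using K by auto
    show "(\<integral>\<^sup>+ \<omega>. Hm x r m (U0 m \<omega>) \<partial>M) = ennreal (GG (aa m) (x m) (r m))"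
      unfolding Hm_def using uni_pair[OF prob_space_axioms U0_unif[OF m] U1_unif[OF m]] aa_range[OF m] by simp
  qed simp
  finally show ?thesis .
qed

lemma ev3_meas: "(\<lambda>z. indicator (ev a x (fst z)) (fst (snd z), snd (snd z)) :: ennreal)
    \<in> borel_measurable (borel \<Otimes>\<^sub>M (borel \<Otimes>\<^sub>M borel))"
proof -
  have "(\<lambda>z. indicator (ev a x (fst z)) (fst (snd z), snd (snd z)) :: ennreal)
      = indicator {z \<in> space (borel \<Otimes>\<^sub>M (borel \<Otimes>\<^sub>M borel)).
          (if fst z = 1 then fst (snd z) powr a * snd (snd z) else fst (snd z) powr a) \<le> x}"
    by (auto simp: fun_eq_iff ev_def indicator_def space_pair_measure)
  also have "\<dots> \<in> borel_measurable (borel \<Otimes>\<^sub>M (borel \<Otimes>\<^sub>M borel))"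
    by (intro borel_measurable_indicator) measurable
  finally show ?thesis .
qed

lemma GG_meas[measurable]: "(\<lambda>r. GG a x r) \<in> borel_measurable borel"
  unfolding GG_def by measurable

lemma key:
  assumes K: "K \<subseteq> D"
  shows "emeasure M {\<omega>\<in>space M. \<forall>m\<in>K. U0 m \<omega> powr (1 - p m) * U1 m \<omega> ^ I m \<omega> \<le> x m}
       = (\<integral>\<^sup>+ \<omega>. ennreal (\<Prod>m\<in>K. GG (aa m) (x m) (real (I m \<omega>))) \<partial>M)"
proof -
  have fin: "finite K" using K finite_subset by blast
  have compm: "\<And>m. m \<in> K \<Longrightarrow> (\<lambda>v. v m) \<in> measurable N borel"
    using K by (intro measurable_component_singleton) auto
  define E where "E = {\<omega>\<in>space M. \<forall>m\<in>K. (if real (I m \<omega>) = 1 then U0 m \<omega> powr aa m * U1 m \<omega> else U0 m \<omega> powr aa m) \<le> x m}"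
  have E_eq: "{\<omega>\<in>space M. \<forall>m\<in>K. U0 m \<omega> powr (1 - p m) * U1 m \<omega> ^ I m \<omega> \<le> x m} = E"
  proof -
    have "\<And>\<omega> m. \<omega> \<in> space M \<Longrightarrow> m \<in> K \<Longrightarrow>
       U0 m \<omega> powr (1 - p m) * U1 m \<omega> ^ I m \<omega> = (if real (I m \<omega>) = 1 then U0 m \<omega> powr aa m * U1 m \<omega> else U0 m \<omega> powr aa m)"
    proof -
      fix \<omega> m assume "\<omega> \<in> space M" "m \<in> K"
      hence "I m \<omega> \<in> {0,1}" using I_01[of m \<omega>] K by auto
      thus "U0 m \<omega> powr (1 - p m) * U1 m \<omega> ^ I m \<omega> = (if real (I m \<omega>) = 1 then U0 m \<omega> powr aa m * U1 m \<omega> else U0 m \<omega> powr aa m)"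
        by (auto simp: aa_def)
    qed
    note eq = this
    show ?thesis unfolding E_def
      by (intro Collect_cong conj_cong refl ball_cong) (simp only: eq)
  qed
  have Em: "E \<in> sets M"
  proof -
    have "\<And>m. m \<in> K \<Longrightarrow> (\<lambda>\<omega>. (if real (I m \<omega>) = 1 then U0 m \<omega> powr aa m * U1 m \<omega> else U0 m \<omega> powr aa m)) \<in> borel_measurable M"
    proof -
      fix m assume "m \<in> K" hence m: "m \<in> D" using K by auto
      have [measurable]: "(\<lambda>\<omega>. real (I m \<omega>)) \<in> borel_measurable M"
        using Im[OF m] by (rule measurable_compose) simp
      show "(\<lambda>\<omega>. (if real (I m \<omega>) = 1 then U0 m \<omega> powr aa m * U1 m \<omega> else U0 m \<omega> powr aa m)) \<in> borel_measurable M"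
        using m by measurable
    qed
    thus ?thesis unfolding E_def
      by (intro sets.sets_Collect_finite_All fin) (auto intro: borel_measurable_le[unfolded pred_def, simplified])
  qed
  define \<Psi> where "\<Psi> z = (\<Prod>m\<in>K. indicator (ev (aa m) (x m) (fst (fst z) m)) (fst (snd z) m, snd (snd z) m) :: ennreal)"
    for z :: "((nat \<Rightarrow> real) \<times> (nat \<Rightarrow> real)) \<times> ((nat \<Rightarrow> real) \<times> (nat \<Rightarrow> real))"
  let ?NN = "N \<Otimes>\<^sub>M N"
  have Psim: "\<Psi> \<in> borel_measurable (?NN \<Otimes>\<^sub>M ?NN)"
    unfolding \<Psi>_def
  proof (rule borel_measurable_prod_ennreal)
    fix m assume m: "m \<in> K"
    have [measurable]: "(\<lambda>v. v m) \<in> measurable N borel" using compm[OF m] .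
    have "(\<lambda>z::((nat \<Rightarrow> real) \<times> (nat \<Rightarrow> real)) \<times> ((nat \<Rightarrow> real) \<times> (nat \<Rightarrow> real)). (fst (fst z) m, (fst (snd z) m, snd (snd z) m)))
        \<in> measurable (?NN \<Otimes>\<^sub>M ?NN) (borel \<Otimes>\<^sub>M (borel \<Otimes>\<^sub>M borel))"
      by measurable
    from measurable_compose[OF this ev3_meas[of "aa m" "x m"]]
    show "(\<lambda>z. indicator (ev (aa m) (x m) (fst (fst z) m)) (fst (snd z) m, snd (snd z) m) :: ennreal) \<in> borel_measurable (?NN \<Otimes>\<^sub>M ?NN)"
      by simp
  qed
  have X0'm: "X0' \<in> measurable M ?NN" unfolding X0'_def using c0_space by measurable
  have Ym: "(\<lambda>\<omega>. (X1 \<omega>, X2 \<omega>)) \<in> measurable M ?NN" by measurable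
  have Zm: "(\<lambda>\<omega>. (X0' \<omega>, (X1 \<omega>, X2 \<omega>))) \<in> measurable M (?NN \<Otimes>\<^sub>M ?NN)"
    using X0'm Ym by (rule measurable_Pair)
  have dist: "distr M (?NN \<Otimes>\<^sub>M ?NN) (\<lambda>\<omega>. (X0' \<omega>, (X1 \<omega>, X2 \<omega>)))
      = distr M ?NN X0' \<Otimes>\<^sub>M distr M ?NN (\<lambda>\<omega>. (X1 \<omega>, X2 \<omega>))"
    using indep_0_12 by (simp add: indep_var_distribution_eq)
  interpret Q12: prob_space "distr M ?NN (\<lambda>\<omega>. (X1 \<omega>, X2 \<omega>))" by (rule prob_space_distr) (rule Ym)
  have "emeasure M {\<omega>\<in>space M. \<forall>m\<in>K. U0 m \<omega> powr (1 - p m) * U1 m \<omega> ^ I m \<omega> \<le> x m}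
      = (\<integral>\<^sup>+ \<omega>. indicator E \<omega> \<partial>M)"
    using Em by (simp add: E_eq)
  also have "\<dots> = (\<integral>\<^sup>+ \<omega>. \<Psi> (X0' \<omega>, (X1 \<omega>, X2 \<omega>)) \<partial>M)"
  proof (rule nn_integral_cong)
    fix \<omega> assume \<omega>: "\<omega> \<in> space M"
    have eqm: "\<And>m. m \<in> K \<Longrightarrow> indicator (ev (aa m) (x m) (fst (X0' \<omega>) m)) (X1 \<omega> m, X2 \<omega> m)
        = (indicator {\<omega>. (if real (I m \<omega>) = 1 then U0 m \<omega> powr aa m * U1 m \<omega> else U0 m \<omega> powr aa m) \<le> x m} \<omega> :: ennreal)"
      using K by (auto simp: X0'_def X0_def X1_def X2_def ev_def indicator_def)
    have "\<Psi> (X0' \<omega>, (X1 \<omega>, X2 \<omega>)) = (\<Prod>m\<in>K. indicator {\<omega>. (if real (I m \<omega>) = 1 then U0 m \<omega> powr aa m * U1 m \<omega> else U0 m \<omega> powr aa m) \<le> x m} \<omega>)"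
      unfolding \<Psi>_def by (simp add: eqm)
    also have "\<dots> = indicator E \<omega>"
      using \<omega> fin by (cases "\<omega> \<in> E") (auto simp: E_def indicator_def prod_zero_iff intro!: prod.neutral)
    finally show "indicator E \<omega> = \<Psi> (X0' \<omega>, (X1 \<omega>, X2 \<omega>))" ..
  qed
  also have "\<dots> = (\<integral>\<^sup>+ z. \<Psi> z \<partial>distr M (?NN \<Otimes>\<^sub>M ?NN) (\<lambda>\<omega>. (X0' \<omega>, (X1 \<omega>, X2 \<omega>))))"
    using Psim by (intro nn_integral_distr[OF Zm, symmetric]) simp
  also have "\<dots> = (\<integral>\<^sup>+ u. \<integral>\<^sup>+ y. \<Psi> (u, y) \<partial>distr M ?NN (\<lambda>\<omega>. (X1 \<omega>, X2 \<omega>)) \<partial>distr M ?NN X0')"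
  proof -
    have "sets (distr M ?NN X0' \<Otimes>\<^sub>M distr M ?NN (\<lambda>\<omega>. (X1 \<omega>, X2 \<omega>))) = sets (?NN \<Otimes>\<^sub>M ?NN)"
      by (intro sets_pair_measure_cong) simp_all
    hence Psim': "\<Psi> \<in> borel_measurable (distr M ?NN X0' \<Otimes>\<^sub>M distr M ?NN (\<lambda>\<omega>. (X1 \<omega>, X2 \<omega>)))"
      using Psim measurable_cong_sets by blast
    show ?thesis unfolding dist using Q12.nn_integral_fst[OF Psim'] by simp
  qed
  also have "\<dots> = (\<integral>\<^sup>+ u. (\<Prod>m\<in>K. ennreal (GG (aa m) (x m) (fst u m))) \<partial>distr M ?NN X0')"
    unfolding \<Psi>_def by (simp only: fst_conv snd_conv stage2[OF K])
  also have "\<dots> = (\<integral>\<^sup>+ \<omega>. (\<Prod>m\<in>K. ennreal (GG (aa m) (x m) (fst (X0' \<omega>) m))) \<partial>M)"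
  proof -
    have "(\<lambda>u. \<Prod>m\<in>K. ennreal (GG (aa m) (x m) (fst u m))) \<in> borel_measurable ?NN"
    proof (rule borel_measurable_prod_ennreal)
      fix m assume m: "m \<in> K"
      have [measurable]: "(\<lambda>v. v m) \<in> measurable N borel" using compm[OF m] .
      show "(\<lambda>u. ennreal (GG (aa m) (x m) (fst u m))) \<in> borel_measurable ?NN" by measurable
    qed
    thus ?thesis by (intro nn_integral_distr[OF X0'm]) simp
  qed
  also have "\<dots> = (\<integral>\<^sup>+ \<omega>. ennreal (\<Prod>m\<in>K. GG (aa m) (x m) (real (I m \<omega>))) \<partial>M)"
  proof (rule nn_integral_cong)
    fix \<omega> assume "\<omega> \<in> space M"
    have "(\<Prod>m\<in>K. ennreal (GG (aa m) (x m) (fst (X0' \<omega>) m))) = (\<Prod>m\<in>K. ennreal (GG (aa m) (x m) (real (I m \<omega>))))"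
      using K by (intro prod.cong) (auto simp: X0'_def X0_def)
    also have "\<dots> = ennreal (\<Prod>m\<in>K. GG (aa m) (x m) (real (I m \<omega>)))"
      using K aa_range by (intro prod_ennreal GG_nonneg) auto
    finally show "(\<Prod>m\<in>K. ennreal (GG (aa m) (x m) (fst (X0' \<omega>) m))) = ennreal (\<Prod>m\<in>K. GG (aa m) (x m) (real (I m \<omega>)))" .
  qed
  finally show ?thesis .
qed

definition "Y m \<omega> = (real (I m \<omega>) - p m) / p m"
definition "cc x m = 1 - clip (x m) powr (p m / (1 - p m))"

lemma IR_meas[measurable]: "m \<in> D \<Longrightarrow> (\<lambda>\<omega>. real (I m \<omega>)) \<in> borel_measurable M"
  by (rule measurable_compose[OF Im]) simp_all

lemma int_I: "m \<in> D \<Longrightarrow> integrable M (\<lambda>\<omega>. real (I m \<omega>))"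
proof (rule integrable_const_bound[where B=1])
  assume m: "m \<in> D"
  show "AE \<omega> in M. norm (real (I m \<omega>)) \<le> 1"
  proof (rule AE_I2)
    fix \<omega> assume "\<omega> \<in> space M"
    thus "norm (real (I m \<omega>)) \<le> 1" using I_01[OF m] by fastforce
  qed
  show "(\<lambda>\<omega>. real (I m \<omega>)) \<in> borel_measurable M" using m by (rule IR_meas)
qed

lemma Y_meas[measurable]: "m \<in> D \<Longrightarrow> Y m \<in> borel_measurable M"
  unfolding Y_def[abs_def] by measurable

lemma Y_bound: "m \<in> D \<Longrightarrow> \<omega> \<in> space M \<Longrightarrow> \<bar>Y m \<omega>\<bar> \<le> 1 / p m"
proof -
  assume m: "m \<in> D" and \<omega>: "\<omega> \<in> space M"
  have p: "0 < p m" "p m < 1" using p_range[OF m] by auto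
  have "I m \<omega> \<in> {0,1}" using I_01[OF m \<omega>] .
  hence "\<bar>real (I m \<omega>) - p m\<bar> \<le> 1" using p by auto
  thus ?thesis using p by (simp add: Y_def abs_divide divide_right_mono)
qed

lemma int_prodY:
  assumes J: "J \<subseteq> D"
  shows "integrable M (\<lambda>\<omega>. \<Prod>j\<in>J. Y j \<omega>)"
proof (rule integrable_const_bound[where B="\<Prod>j\<in>J. 1 / p j"])
  show "AE \<omega> in M. norm (\<Prod>j\<in>J. Y j \<omega>) \<le> (\<Prod>j\<in>J. 1 / p j)"
  proof (rule AE_I2)
    fix \<omega> assume \<omega>: "\<omega> \<in> space M"
    have "norm (\<Prod>j\<in>J. Y j \<omega>) = (\<Prod>j\<in>J. \<bar>Y j \<omega>\<bar>)" by (simp add: abs_prod)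
    also have "\<dots> \<le> (\<Prod>j\<in>J. 1 / p j)"
      using J \<omega> Y_bound by (intro prod_mono) auto
    finally show "norm (\<Prod>j\<in>J. Y j \<omega>) \<le> (\<Prod>j\<in>J. 1 / p j)" .
  qed
  show "(\<lambda>\<omega>. \<Prod>j\<in>J. Y j \<omega>) \<in> borel_measurable M"
    using J by (intro borel_measurable_prod) auto
qed

lemma EI: "m \<in> D \<Longrightarrow> (\<integral>\<omega>. real (I m \<omega>) \<partial>M) = p m"
proof -
  assume m: "m \<in> D"
  have S: "{\<omega> \<in> space M. I m \<omega> = 1} \<in> sets M" using m by measurable
  have "(\<integral>\<omega>. real (I m \<omega>) \<partial>M) = (\<integral>\<omega>. indicator {\<omega> \<in> space M. I m \<omega> = 1} \<omega> \<partial>M)"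
  proof (rule Bochner_Integration.integral_cong)
    fix \<omega> assume "\<omega> \<in> space M"
    thus "real (I m \<omega>) = indicator {\<omega> \<in> space M. I m \<omega> = 1} \<omega>"
      using I_01[OF m] by (auto simp: indicator_def)
  qed simp
  also have "\<dots> = p m" using S I_marg[OF m] by simp
  finally show ?thesis .
qed

lemma EY: "m \<in> D \<Longrightarrow> (\<integral>\<omega>. Y m \<omega> \<partial>M) = 0"
proof -
  assume m: "m \<in> D"
  have "(\<integral>\<omega>. Y m \<omega> \<partial>M) = (\<integral>\<omega>. real (I m \<omega>) - p m \<partial>M) / p m"
    unfolding Y_def by simp
  also have "(\<integral>\<omega>. real (I m \<omega>) - p m \<partial>M) = (\<integral>\<omega>. real (I m \<omega>) \<partial>M) - p m"
    using m int_I[OF m] by (subst Bochner_Integration.integral_diff) (auto simp: prob_space)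
  finally show ?thesis using EI[OF m] by simp
qed

lemma expand:
  assumes K: "K \<subseteq> D" and \<omega>: "\<omega> \<in> space M"
  shows "(\<Prod>m\<in>K. GG (aa m) (x m) (real (I m \<omega>)))
       = (\<Prod>m\<in>K. clip (x m)) * (\<Sum>J\<in>Pow K. (\<Prod>j\<in>J. Y j \<omega>) * (\<Prod>j\<in>J. cc x j))"
proof -
  have fin: "finite K" using K finite_subset by blast
  have "(\<Prod>m\<in>K. GG (aa m) (x m) (real (I m \<omega>))) = (\<Prod>m\<in>K. clip (x m) * (Y m \<omega> * cc x m + 1))"
  proof (rule prod.cong)
    fix m assume "m \<in> K" hence m: "m \<in> D" using K by auto
    have "real (I m \<omega>) = 0 \<or> real (I m \<omega>) = 1" using I_01[OF m \<omega>] by auto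
    from GG_form[OF _ _ this, of "p m" "x m"] p_range[OF m]
    show "GG (aa m) (x m) (real (I m \<omega>)) = clip (x m) * (Y m \<omega> * cc x m + 1)"
      by (simp add: aa_def Y_def cc_def algebra_simps)
  qed simp
  also have "\<dots> = (\<Prod>m\<in>K. clip (x m)) * (\<Prod>m\<in>K. Y m \<omega> * cc x m + 1)"
    by (rule prod.distrib)
  also have "(\<Prod>m\<in>K. Y m \<omega> * cc x m + 1) = (\<Sum>J\<in>Pow K. (\<Prod>j\<in>J. Y j \<omega> * cc x j) * (\<Prod>j\<in>K-J. 1))"
    by (rule prod_add[OF fin])
  also have "\<dots> = (\<Sum>J\<in>Pow K. (\<Prod>j\<in>J. Y j \<omega>) * (\<Prod>j\<in>J. cc x j))"
    by (simp add: prod.distrib)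
  finally show ?thesis .
qed

lemma measure_formula:
  assumes K: "K \<subseteq> D"
  shows "measure M {\<omega>\<in>space M. \<forall>m\<in>K. U0 m \<omega> powr (1 - p m) * U1 m \<omega> ^ I m \<omega> \<le> x m}
       = (\<Prod>m\<in>K. clip (x m)) * (\<Sum>J\<in>Pow K. (\<integral>\<omega>. (\<Prod>j\<in>J. Y j \<omega>) \<partial>M) * (\<Prod>j\<in>J. cc x j))"
proof -
  have fin: "finite K" using K finite_subset by blast
  define f where "f \<omega> = (\<Prod>m\<in>K. GG (aa m) (x m) (real (I m \<omega>)))" for \<omega>
  define g where "g \<omega> = (\<Prod>m\<in>K. clip (x m)) * (\<Sum>J\<in>Pow K. (\<Prod>j\<in>J. Y j \<omega>) * (\<Prod>j\<in>J. cc x j))" for \<omega>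
  have fg: "\<And>\<omega>. \<omega> \<in> space M \<Longrightarrow> f \<omega> = g \<omega>" unfolding f_def g_def by (rule expand[OF K])
  have intS: "integrable M (\<lambda>\<omega>. \<Sum>J\<in>Pow K. (\<Prod>j\<in>J. Y j \<omega>) * (\<Prod>j\<in>J. cc x j))"
  proof (rule Bochner_Integration.integrable_sum)
    fix J assume "J \<in> Pow K" hence "J \<subseteq> D" using K by auto
    thus "integrable M (\<lambda>\<omega>. (\<Prod>j\<in>J. Y j \<omega>) * (\<Prod>j\<in>J. cc x j))"
      by (intro integrable_mult_left int_prodY)
  qed
  have intg: "integrable M g" unfolding g_def
    using intS by (rule integrable_mult_right)
  have "integrable M f = integrable M g"
    by (rule Bochner_Integration.integrable_cong[OF refl]) (rule fg)
  hence intf: "integrable M f" using intg by simp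
  have f0: "\<And>\<omega>. 0 \<le> f \<omega>" unfolding f_def using K aa_range by (intro prod_nonneg GG_nonneg) auto
  have "emeasure M {\<omega>\<in>space M. \<forall>m\<in>K. U0 m \<omega> powr (1 - p m) * U1 m \<omega> ^ I m \<omega> \<le> x m}
      = (\<integral>\<^sup>+ \<omega>. ennreal (f \<omega>) \<partial>M)" unfolding f_def by (rule key[OF K])
  also have "\<dots> = ennreal (\<integral>\<omega>. f \<omega> \<partial>M)"
    using intf f0 by (intro nn_integral_eq_integral) auto
  finally have "measure M {\<omega>\<in>space M. \<forall>m\<in>K. U0 m \<omega> powr (1 - p m) * U1 m \<omega> ^ I m \<omega> \<le> x m} = (\<integral>\<omega>. f \<omega> \<partial>M)"
    using f0 by (simp add: measure_def integral_nonneg)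
  also have "(\<integral>\<omega>. f \<omega> \<partial>M) = (\<integral>\<omega>. g \<omega> \<partial>M)" using fg by (rule Bochner_Integration.integral_cong[OF refl])
  also have "\<dots> = (\<Prod>m\<in>K. clip (x m)) * (\<Sum>J\<in>Pow K. (\<integral>\<omega>. (\<Prod>j\<in>J. Y j \<omega>) \<partial>M) * (\<Prod>j\<in>J. cc x j))"
  proof -
    have "(\<integral>\<omega>. (\<Sum>J\<in>Pow K. (\<Prod>j\<in>J. Y j \<omega>) * (\<Prod>j\<in>J. cc x j)) \<partial>M)
        = (\<Sum>J\<in>Pow K. (\<integral>\<omega>. (\<Prod>j\<in>J. Y j \<omega>) * (\<Prod>j\<in>J. cc x j) \<partial>M))"
    proof (rule Bochner_Integration.integral_sum)
      fix J assume "J \<in> Pow K" hence "J \<subseteq> D" using K by auto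
      thus "integrable M (\<lambda>\<omega>. (\<Prod>j\<in>J. Y j \<omega>) * (\<Prod>j\<in>J. cc x j))"
        by (intro integrable_mult_left int_prodY)
    qed
    thus ?thesis unfolding g_def integral_mult_right_zero integral_mult_left_zero by simp
  qed
  finally show ?thesis .
qed

lemma marg:
  assumes m: "m \<in> D"
  shows "measure M {\<omega> \<in> space M. U0 m \<omega> powr (1 - p m) * U1 m \<omega> ^ I m \<omega> \<le> y} = clip y"
proof -
  have "{\<omega> \<in> space M. U0 m \<omega> powr (1 - p m) * U1 m \<omega> ^ I m \<omega> \<le> y}
      = {\<omega>\<in>space M. \<forall>m'\<in>{m}. U0 m' \<omega> powr (1 - p m') * U1 m' \<omega> ^ I m' \<omega> \<le> (\<lambda>_. y) m'}"
    by simp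
  also have "measure M \<dots> = (\<Prod>m'\<in>{m}. clip y) * (\<Sum>J\<in>Pow {m}. (\<integral>\<omega>. (\<Prod>j\<in>J. Y j \<omega>) \<partial>M) * (\<Prod>j\<in>J. cc (\<lambda>_. y) j))"
    using measure_formula[of "{m}" "\<lambda>_. y"] m by simp
  also have "Pow {m} = insert {} {{m}}" by auto
  also have "(\<Sum>J\<in>insert {} {{m}}. (\<integral>\<omega>. (\<Prod>j\<in>J. Y j \<omega>) \<partial>M) * (\<Prod>j\<in>J. cc (\<lambda>_. y) j)) = 1"
    using EY[OF m] by (simp add: prob_space)
  finally show ?thesis by simp
qed

lemma main:
  shows "copula_of M (\<lambda>m \<omega>. U0 m \<omega> powr (1 - p m) * U1 m \<omega> ^ I m \<omega>) d
           (\<lambda>u. (\<Prod>m\<in>{1..d}. u m) *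
              (1 + (\<Sum>J\<in>{J. J \<subseteq> {1..d} \<and> J \<noteq> {}}.
                     integral\<^sup>L M (\<lambda>\<omega>. \<Prod>j\<in>J. (real (I j \<omega>) - p j) / p j) *
                     (\<Prod>n\<in>J. 1 - u n powr (p n / (1 - p n))))))
         \<and> (\<forall>j\<in>{1..d}. integral\<^sup>L M (\<lambda>\<omega>. \<Prod>i\<in>{j}. (real (I i \<omega>) - p i) / p i) = 0)"
proof
  show "\<forall>j\<in>{1..d}. integral\<^sup>L M (\<lambda>\<omega>. \<Prod>i\<in>{j}. (real (I i \<omega>) - p i) / p i) = 0"
    using EY by (simp add: Y_def)
  show "copula_of M (\<lambda>m \<omega>. U0 m \<omega> powr (1 - p m) * U1 m \<omega> ^ I m \<omega>) d
           (\<lambda>u. (\<Prod>m\<in>{1..d}. u m) *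
              (1 + (\<Sum>J\<in>{J. J \<subseteq> {1..d} \<and> J \<noteq> {}}.
                     integral\<^sup>L M (\<lambda>\<omega>. \<Prod>j\<in>J. (real (I j \<omega>) - p j) / p j) *
                     (\<Prod>n\<in>J. 1 - u n powr (p n / (1 - p n))))))"
    unfolding copula_of_def
  proof (intro allI)
    fix x :: "nat \<Rightarrow> real"
    let ?u = "\<lambda>m. measure M {\<omega> \<in> space M. U0 m \<omega> powr (1 - p m) * U1 m \<omega> ^ I m \<omega> \<le> x m}"
    have u: "\<And>m. m \<in> D \<Longrightarrow> ?u m = clip (x m)" by (rule marg)
    have fin: "finite (Pow D)" by simp
    have PD: "Pow D = insert {} {J. J \<subseteq> D \<and> J \<noteq> {}}" by auto
    have "measure M {\<omega> \<in> space M. \<forall>m\<in>D. U0 m \<omega> powr (1 - p m) * U1 m \<omega> ^ I m \<omega> \<le> x m}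
        = (\<Prod>m\<in>D. clip (x m)) * (\<Sum>J\<in>Pow D. (\<integral>\<omega>. (\<Prod>j\<in>J. Y j \<omega>) \<partial>M) * (\<Prod>j\<in>J. cc x j))"
      by (rule measure_formula) simp
    also have "(\<Sum>J\<in>Pow D. (\<integral>\<omega>. (\<Prod>j\<in>J. Y j \<omega>) \<partial>M) * (\<Prod>j\<in>J. cc x j))
        = 1 + (\<Sum>J\<in>{J. J \<subseteq> D \<and> J \<noteq> {}}. (\<integral>\<omega>. (\<Prod>j\<in>J. Y j \<omega>) \<partial>M) * (\<Prod>j\<in>J. cc x j))"
      unfolding PD by (subst sum.insert) (auto simp: prob_space)
    also have "(\<Sum>J\<in>{J. J \<subseteq> D \<and> J \<noteq> {}}. (\<integral>\<omega>. (\<Prod>j\<in>J. Y j \<omega>) \<partial>M) * (\<Prod>j\<in>J. cc x j))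
        = (\<Sum>J\<in>{J. J \<subseteq> D \<and> J \<noteq> {}}. integral\<^sup>L M (\<lambda>\<omega>. \<Prod>j\<in>J. (real (I j \<omega>) - p j) / p j) *
                     (\<Prod>n\<in>J. 1 - ?u n powr (p n / (1 - p n))))"
    proof (rule sum.cong[OF refl])
      fix J assume "J \<in> {J. J \<subseteq> D \<and> J \<noteq> {}}"
      hence J: "J \<subseteq> D" by auto
      have "(\<Prod>j\<in>J. cc x j) = (\<Prod>n\<in>J. 1 - ?u n powr (p n / (1 - p n)))"
        using J u by (intro prod.cong) (auto simp: cc_def)
      thus "(\<integral>\<omega>. (\<Prod>j\<in>J. Y j \<omega>) \<partial>M) * (\<Prod>j\<in>J. cc x j) = integral\<^sup>L M (\<lambda>\<omega>. \<Prod>j\<in>J. (real (I j \<omega>) - p j) / p j) *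
                     (\<Prod>n\<in>J. 1 - ?u n powr (p n / (1 - p n)))"
        by (simp add: Y_def)
    qed
    also have "(\<Prod>m\<in>D. clip (x m)) = (\<Prod>m\<in>D. ?u m)"
      using u by (intro prod.cong) auto
    finally show "measure M {\<omega> \<in> space M. \<forall>m\<in>{1..d}. U0 m \<omega> powr (1 - p m) * U1 m \<omega> ^ I m \<omega> \<le> x m} =
      (\<Prod>m\<in>{1..d}. ?u m) *
              (1 + (\<Sum>J\<in>{J. J \<subseteq> {1..d} \<and> J \<noteq> {}}.
                     integral\<^sup>L M (\<lambda>\<omega>. \<Prod>j\<in>J. (real (I j \<omega>) - p j) / p j) *
                     (\<Prod>n\<in>J. 1 - ?u n powr (p n / (1 - p n)))))" .
  qed
qed

end

theorem corollary3p2: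
  fixes M :: "'a measure" and d :: nat
    and p :: "nat \<Rightarrow> real"
    and I :: "nat \<Rightarrow> 'a \<Rightarrow> nat"
    and U0 U1 :: "nat \<Rightarrow> 'a \<Rightarrow> real"
  assumes "prob_space M"
    and p_range: "\<And>j. j \<in> {1..d} \<Longrightarrow> 0 < p j \<and> p j < 1"
    and I_rv: "\<And>j. j \<in> {1..d} \<Longrightarrow> I j \<in> measurable M (count_space UNIV)"
    and I_01: "\<And>j \<omega>. j \<in> {1..d} \<Longrightarrow> \<omega> \<in> space M \<Longrightarrow> I j \<omega> \<in> {0, 1}"
    and I_marg: "\<And>j. j \<in> {1..d} \<Longrightarrow> measure M {\<omega> \<in> space M. I j \<omega> = 1} = p j"
    and U0_unif: "\<And>m. m \<in> {1..d} \<Longrightarrow>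
                    distributed M lborel (U0 m) (\<lambda>x. indicator {0..1} x)"
    and U1_unif: "\<And>m. m \<in> {1..d} \<Longrightarrow>
                    distributed M lborel (U1 m) (\<lambda>x. indicator {0..1} x)"
    and U0_indep: "prob_space.indep_vars M (\<lambda>_. borel) U0 {1..d}"
    and U1_indep: "prob_space.indep_vars M (\<lambda>_. borel) U1 {1..d}"
    and vec_indep: "prob_space.indep_vars M (\<lambda>_. Pi\<^sub>M {1..d} (\<lambda>_. borel))
        (\<lambda>i \<omega>. if i = (0::nat) then (\<lambda>m\<in>{1..d}. real (I m \<omega>))
                else if i = 1 then (\<lambda>m\<in>{1..d}. U0 m \<omega>)
                else (\<lambda>m\<in>{1..d}. U1 m \<omega>)) {0, 1, 2}"
  shows "copula_of M (\<lambda>m \<omega>. U0 m \<omega> powr (1 - p m) * U1 m \<omega> ^ I m \<omega>) d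
           (\<lambda>u. (\<Prod>m\<in>{1..d}. u m) *
              (1 + (\<Sum>J\<in>{J. J \<subseteq> {1..d} \<and> J \<noteq> {}}.
                     integral\<^sup>L M (\<lambda>\<omega>. \<Prod>j\<in>J. (real (I j \<omega>) - p j) / p j) *
                     (\<Prod>n\<in>J. 1 - u n powr (p n / (1 - p n))))))
         \<and> (\<forall>j\<in>{1..d}. integral\<^sup>L M (\<lambda>\<omega>. \<Prod>i\<in>{j}. (real (I i \<omega>) - p i) / p i) = 0)"
proof -
  interpret cop M d p I U0 U1
    by (intro cop.intro cop_axioms.intro assms)
  show ?thesis by (rule main)
qed


end
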